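(* Let $N\in\mathbb N$, let $T$ be an $N$-valid tree, and let $\tilde T$ and $\Gamma$ be the tree and digraph constructed from $T$ as described in the context. Let $m_0$ be a mask whose values $\lambda_{\mathbf c_1,\dots,\mathbf c_{N+1}}$ are compatible with $T$, and let $A^{(0)}=(a^{(0)}_{\mathbf i_1,\dots,\mathbf i_N})$ be the array $$a^{(0)}_{\mathbf i_1,\mathbf i_2,\dots,\mathbf i_N}=\lambda_{\mathbf i_1,\mathbf i_2,\dots,\mathbf i_N,\mathbf 0}\,\lambda_{\mathbf i_2,\dots,\mathbf i_N,\mathbf 0,\mathbf 0}\cdots\lambda_{\mathbf i_N,\mathbf 0,\dots,\mathbf 0}.$$ Then for every vertex $(\mathbf i_1,\dots,\mathbf i_N)$ of $\tilde T$ of level $l\le N$ one has $a^{(0)}_{\mathbf i_1,\dots,\mathbf i_N}=1$.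
   Context: Let $p$ be a prime, $s\in\mathbb N$, and $GF(p^s)$ the field with $p^s$ elements; each $\mathbf u\in GF(p^s)$ is identified with a vector $(u^{(0)},\dots,u^{(s-1)})\in\{0,\dots,p-1\}^s$ via a fixed basis over $GF(p)$, and $\mathbf 0$ denotes the zero element. The local field $F^{(s)}$ of characteristic $p$ is the field of formal Laurent series $\sum_{j\ge k}\mathbf x_j t^j$, $\mathbf x_j\in GF(p^s)$, identified with two-sided sequences $x=(\mathbf x_j)_{j\in\mathbb Z}$ having only finitely many nonzero $\mathbf x_j$ with $j<0$. For $\mathbf a\in GF(p^s)$ and $k\in\mathbb Z$, $\mathbf a g_k$ denotes the sequence with entry $\mathbf a$ at position $k$ and $\mathbf 0$ elsewhere. The dilation is $\mathcal A(\sum_n \mathbf x_n g_n)=\sum_n\mathbf x_n g_{n-1}$. For $\mathbf u\in GF(p^s)$, $k\in\mathbb Z$, the Rademacher character is $\mathbf r_k^{\mathbf u}(x)=\exp\big(\tfrac{2\pi i}{p}\sum_{l=0}^{s-1}u^{(l)}x_k^{(l)}\big)$. Every continuous character of the additive group of $F^{(s)}$ is uniquely $\chi=\prod_{k\in\mathbb Z}\mathbf r_k^{\mathbf b_k}$ with $\mathbf b_k=\mathbf 0$ for all sufficiently large $k$; write $(\chi,x)=\chi(x)$ and let $\chi\mathcal A^{j}$ be the character $x\mapsto\chi(\mathcal A^{j}x)$. For $\mathbf a_{-N},\dots,\mathbf a_0\in GF(p^s)$ let $C(\mathbf a_{-N},\dots,\mathbf a_0)$ be the set of characters $\prod_k\mathbf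 r_k^{\mathbf b_k}$ with $\mathbf b_k=\mathbf a_k$ for $-N\le k\le 0$ and $\mathbf b_k=\mathbf 0$ for $k\ge1$ (the coset $(F^{(s)}_{-N})^\perp\mathbf r_{-N}^{\mathbf a_{-N}}\cdots\mathbf r_0^{\mathbf a_0}$). Mask: let $H_0^{(N+1)}=\{\mathbf a_{-1}g_{-1}\dot+\cdots\dot+\mathbf a_{-(N+1)}g_{-(N+1)}:\mathbf a_i\in GF(p^s)\}$. A mask is a function $m_0(\chi)=\frac1p\sum_{h\in H_0^{(N+1)}}\beta_h\overline{(\chi\mathcal A^{-1},h)}$ with $\beta_h\in\mathbb C$; it is constant on each set $C(\mathbf a_{-N},\dots,\mathbf a_0)$, and we put $\lambda_{\mathbf a_{-N},\dots,\mathbf a_0}=|m_0(\chi)|^2$ for $\chi\in C(\mathbf a_{-N},\dots,\mathbf a_0)$ (an array indexed by $GF(p^s)^{N+1}$). Trees: consider a finite rooted tree $T$ whose vertices carry labels, with arcs directed from each non-root vertex to its parent; the level of a vertex is its distance to the root. $T$ is $N$-valid if (1) every label is an element of $GF(p^s)$; (2) the root and all vertices of levels $1,\dots,N-1$ have label $\mathbf 0$; (3) for every $(\mathbf c_1,\dots,\mathbf c_N)\in GF(p^s)^N$ there is exactly one directed path $v_1\to v_2\to\cdots\to v_N$ in $T$ ($v_{i+1}$ the parent of $v_i$) whose labels are $\mathbf c_1,\dots,\mathbf c_N$. The tree $\tilde T$ has as vertices the label tuples $(\mathbf c_1,\dots,\mathbf c_N)$ of such paths, with an arc from the tuple of the path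 starting at $v$ to the tuple of the path starting at the parent of $v$; its root is $(\mathbf 0,\dots,\mathbf 0)$ and the level of a tuple in $\tilde T$ equals (level of $v_1$ in $T$) $-(N-1)$. The digraph $\Gamma$ has the same vertices; for a vertex $B=(\mathbf b_1,\dots,\mathbf b_N)$ its successor set is $D(B)=\{\mathbf d\in GF(p^s): (\mathbf b_2,\dots,\mathbf b_N,\mathbf d)$ is a vertex of $\tilde T$ of level strictly less than the level of $B\}$, and $B$ is connected in $\Gamma$ to each $(\mathbf b_2,\dots,\mathbf b_N,\mathbf d)$, $\mathbf d\in D(B)$. The values $\lambda$ are compatible with $T$ if: $\lambda_{\mathbf 0,\dots,\mathbf 0}=1$ and $\lambda_{\mathbf 0,\dots,\mathbf 0,\mathbf d}=0$ for $\mathbf d\ne\mathbf 0$; and for every vertex $B=(\mathbf b_1,\dots,\mathbf b_N)\ne(\mathbf 0,\dots,\mathbf 0)$ of $\tilde T$, $\sum_{\mathbf d\in D(B)}\lambda_{\mathbf b_1,\dots,\mathbf b_N,\mathbf d}=1$ and $\lambda_{\mathbf b_1,\dots,\mathbf b_N,\mathbf d}=0$ for $\mathbf d\notin D(B)$. The component $a_{\mathbf i_1,\dots,\mathbf i_N}$ of an $N$-dimensional array is said to correspond to the vertex $(\mathbf i_1,\dots,\mathbf i_N)$. *)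

theory Defs
  imports Complex_Main "HOL-Computational_Algebra.Primes"
begin

text \<open>An element u of GF(p^s) is identified with its coordinate vector
(u^(0),...,u^(s-1)) in {0..p-1}^s; we represent it as a function
nat => nat vanishing from index s on.  Only the additive structure and the
coordinates are used in the statement.\<close>

definition gf :: "nat \<Rightarrow> nat \<Rightarrow> (nat \<Rightarrow> nat) set" where
  "gf p s = {u. (\<forall>l<s. u l < p) \<and> (\<forall>l\<ge>s. u l = 0)}"

definition gzero :: "nat \<Rightarrow> nat" where
  "gzero = (\<lambda>_. 0)"

definition local_field :: "nat \<Rightarrow> nat \<Rightarrow> (int \<Rightarrow> nat \<Rightarrow> nat) set" where
  "local_field p s = {x. (\<forall>k. x k \<in> gf p s) \<and> finite {k. k < 0 \<and> x k \<noteq> gzero}}"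

text \<open>Value of the character prod_k r_k^(b_k) at x (only finitely many factors
differ from 1).\<close>
definition char_val :: "nat \<Rightarrow> nat \<Rightarrow> (int \<Rightarrow> nat \<Rightarrow> nat) \<Rightarrow> (int \<Rightarrow> nat \<Rightarrow> nat) \<Rightarrow> complex" where
  "char_val p s b x =
     cis (2 * pi / real p *
          real (\<Sum>k\<in>{k. b k \<noteq> gzero \<and> x k \<noteq> gzero}. \<Sum>l<s. b k l * x k l))"

text \<open>Inverse dilation: A(sum x_n g_n) = sum x_n g_(n-1), hence (A^-1 x)_k = x_(k-1).\<close>
definition dil_inv :: "(int \<Rightarrow> nat \<Rightarrow> nat) \<Rightarrow> (int \<Rightarrow> nat \<Rightarrow> nat)" where
  "dil_inv x = (\<lambda>k. x (k - 1))"

text \<open>H_0^(N+1): elements a_-1 g_-1 + ... + a_-(N+1) g_-(N+1).\<close>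
definition H0 :: "nat \<Rightarrow> nat \<Rightarrow> nat \<Rightarrow> (int \<Rightarrow> nat \<Rightarrow> nat) set" where
  "H0 p s N = {h. (\<forall>k. h k \<in> gf p s) \<and>
                  (\<forall>k. (k < - (int N + 1) \<or> k > -1) \<longrightarrow> h k = gzero)}"

text \<open>The mask m_0(chi) = 1/p sum_h beta_h conj((chi A^-1, h)), chi given by its
digit sequence b.\<close>
definition mask_m0 ::
  "nat \<Rightarrow> nat \<Rightarrow> nat \<Rightarrow> ((int \<Rightarrow> nat \<Rightarrow> nat) \<Rightarrow> complex) \<Rightarrow> (int \<Rightarrow> nat \<Rightarrow> nat) \<Rightarrow> complex" where
  "mask_m0 p s N \<beta> b =
     (1 / of_nat p) * (\<Sum>h\<in>H0 p s N. \<beta> h * cnj (char_val p s b (dil_inv h)))"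

text \<open>The set C(a_-N,...,a_0) of characters (as digit sequences); the list c
is [a_-N, ..., a_0].\<close>
definition coset_C :: "nat \<Rightarrow> nat \<Rightarrow> nat \<Rightarrow> (nat \<Rightarrow> nat) list \<Rightarrow> (int \<Rightarrow> nat \<Rightarrow> nat) set" where
  "coset_C p s N c = {b. (\<forall>k. b k \<in> gf p s) \<and>
                         (\<forall>k. - int N \<le> k \<and> k \<le> 0 \<longrightarrow> b k = c ! nat (k + int N)) \<and>
                         (\<forall>k\<ge>1. b k = gzero)}"

definition is_mask_lambda :: "nat \<Rightarrow> nat \<Rightarrow> nat \<Rightarrow> ((nat \<Rightarrow> nat) list \<Rightarrow> real) \<Rightarrow> bool" where
  "is_mask_lambda p s N lam \<longleftrightarrow>
     (\<exists>\<beta>. \<forall>c. set c \<subseteq> gf p s \<and> length c = N + 1 \<longrightarrow>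
            (\<forall>b\<in>coset_C p s N c. lam c = (cmod (mask_m0 p s N \<beta> b))\<^sup>2))"

text \<open>Finite rooted tree on vertex set V with root r; every non-root vertex v
has the arc v -> par v.\<close>
definition rooted_tree :: "'v set \<Rightarrow> 'v \<Rightarrow> ('v \<Rightarrow> 'v) \<Rightarrow> bool" where
  "rooted_tree V r par \<longleftrightarrow> finite V \<and> r \<in> V \<and> (\<forall>v\<in>V - {r}. par v \<in> V) \<and>
                          (\<forall>v\<in>V. \<exists>n. (par ^^ n) v = r)"

definition level :: "('v \<Rightarrow> 'v) \<Rightarrow> 'v \<Rightarrow> 'v \<Rightarrow> nat" where
  "level par r v = (LEAST n. (par ^^ n) v = r)"

definition path_labels :: "('v \<Rightarrow> 'v) \<Rightarrow> ('v \<Rightarrow> nat \<Rightarrow> nat) \<Rightarrow> nat \<Rightarrow> 'v \<Rightarrow> (nat \<Rightarrow> nat) list" where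
  "path_labels par lab N v = map (\<lambda>i. lab ((par ^^ i) v)) [0..<N]"

text \<open>A directed path of N vertices starting at v exists iff v is in V and
has level at least N-1.\<close>
definition path_start :: "'v set \<Rightarrow> 'v \<Rightarrow> ('v \<Rightarrow> 'v) \<Rightarrow> nat \<Rightarrow> 'v \<Rightarrow> bool" where
  "path_start V r par N v \<longleftrightarrow> v \<in> V \<and> N - 1 \<le> level par r v"

definition valid_tree ::
  "nat \<Rightarrow> nat \<Rightarrow> nat \<Rightarrow> 'v set \<Rightarrow> 'v \<Rightarrow> ('v \<Rightarrow> 'v) \<Rightarrow> ('v \<Rightarrow> nat \<Rightarrow> nat) \<Rightarrow> bool" where
  "valid_tree p s N V r par lab \<longleftrightarrow>
     rooted_tree V r par \<and>
     (\<forall>v\<in>V. lab v \<in> gf p s) \<and>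
     (\<forall>v\<in>V. level par r v \<le> N - 1 \<longrightarrow> lab v = gzero) \<and>
     (\<forall>c. set c \<subseteq> gf p s \<and> length c = N \<longrightarrow>
          (\<exists>!v. path_start V r par N v \<and> path_labels par lab N v = c))"

definition tt_level ::
  "'v set \<Rightarrow> 'v \<Rightarrow> ('v \<Rightarrow> 'v) \<Rightarrow> ('v \<Rightarrow> nat \<Rightarrow> nat) \<Rightarrow> nat \<Rightarrow> (nat \<Rightarrow> nat) list \<Rightarrow> nat" where
  "tt_level V r par lab N c =
     level par r (THE v. path_start V r par N v \<and> path_labels par lab N v = c) - (N - 1)"

definition succ_D ::
  "nat \<Rightarrow> nat \<Rightarrow> 'v set \<Rightarrow> 'v \<Rightarrow> ('v \<Rightarrow> 'v) \<Rightarrow> ('v \<Rightarrow> nat \<Rightarrow> nat) \<Rightarrow> nat \<Rightarrow>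
     (nat \<Rightarrow> nat) list \<Rightarrow> (nat \<Rightarrow> nat) set" where
  "succ_D p s V r par lab N B =
     {d \<in> gf p s. tt_level V r par lab N (tl B @ [d]) < tt_level V r par lab N B}"

definition compatible ::
  "nat \<Rightarrow> nat \<Rightarrow> 'v set \<Rightarrow> 'v \<Rightarrow> ('v \<Rightarrow> 'v) \<Rightarrow> ('v \<Rightarrow> nat \<Rightarrow> nat) \<Rightarrow> nat \<Rightarrow>
     ((nat \<Rightarrow> nat) list \<Rightarrow> real) \<Rightarrow> bool" where
  "compatible p s V r par lab N lam \<longleftrightarrow>
     lam (replicate (N + 1) gzero) = 1 \<and>
     (\<forall>d\<in>gf p s - {gzero}. lam (replicate N gzero @ [d]) = 0) \<and>
     (\<forall>B. set B \<subseteq> gf p s \<and> length B = N \<and> B \<noteq> replicate N gzero \<longrightarrow>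
          (\<Sum>d\<in>succ_D p s V r par lab N B. lam (B @ [d])) = 1 \<and>
          (\<forall>d\<in>gf p s - succ_D p s V r par lab N B. lam (B @ [d]) = 0))"

definition array_a0 :: "nat \<Rightarrow> ((nat \<Rightarrow> nat) list \<Rightarrow> real) \<Rightarrow> (nat \<Rightarrow> nat) list \<Rightarrow> real" where
  "array_a0 N lam i = (\<Prod>k\<in>{1..N}. lam (drop (k - 1) i @ replicate k gzero))"

end

theory Submission
  imports Defs
begin

lemma lev_root: "level par r r = 0"
  unfolding level_def by (rule Least_eq_0) simp

lemma lev_reach: "rooted_tree V r par \<Longrightarrow> v \<in> V \<Longrightarrow> (par ^^ level par r v) v = r"
proof -
  assume T: "rooted_tree V r par" and v: "v \<in> V"
  have "\<exists>n. (par ^^ n) v = r" using T v unfolding rooted_tree_def by blast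
  thus ?thesis unfolding level_def by (rule LeastI_ex)
qed

lemma lev_le: "(par ^^ n) v = r \<Longrightarrow> level par r v \<le> n"
  unfolding level_def by (rule Least_le)

lemma lev_par:
  assumes T: "rooted_tree V r par" and v: "v \<in> V" "v \<noteq> r"
  shows "par v \<in> V \<and> level par r (par v) = level par r v - 1 \<and> level par r v \<ge> 1"
proof -
  have pv: "par v \<in> V" using T v unfolding rooted_tree_def by auto
  define n where "n = level par r v"
  have hn: "(par ^^ n) v = r" using lev_reach[OF T v(1)] n_def by simp
  have "n \<noteq> 0"
  proof
    assume "n = 0"
    with hn have "v = r" by simp
    with v show False by simp
  qed
  then obtain m where m: "n = Suc m" by (cases n) auto
  have "(par ^^ m) (par v) = r" using hn m by (simp add: funpow_Suc_right del: funpow.simps)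
  hence le1: "level par r (par v) \<le> m" by (rule lev_le)
  have "(par ^^ Suc (level par r (par v))) v = r"
    using lev_reach[OF T pv] by (simp add: funpow_Suc_right del: funpow.simps)
  hence "n \<le> Suc (level par r (par v))" unfolding n_def by (rule lev_le)
  thus ?thesis using le1 m pv n_def by auto
qed

lemma lev_iter:
  assumes T: "rooted_tree V r par" and v: "v \<in> V"
  shows "i \<le> level par r v \<Longrightarrow> (par ^^ i) v \<in> V \<and> level par r ((par ^^ i) v) = level par r v - i"
proof (induction i)
  case 0 thus ?case using v by simp
next
  case (Suc i)
  hence IH: "(par ^^ i) v \<in> V" "level par r ((par ^^ i) v) = level par r v - i" by auto
  have "(par ^^ i) v \<noteq> r" using IH(2) Suc.prems lev_root[of par r] by auto
  from lev_par[OF T IH(1) this] IH show ?case by simp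
qed

context
  fixes p s N :: nat and V :: "'v set" and r :: 'v and par :: "'v \<Rightarrow> 'v"
    and lab :: "'v \<Rightarrow> nat \<Rightarrow> nat"
  assumes vt: "valid_tree p s N V r par lab" and p0: "p > 0" and N1: "N \<ge> 1"
begin

lemma T: "rooted_tree V r par" using vt unfolding valid_tree_def by auto

lemma gzero_gf: "gzero \<in> gf p s" unfolding gf_def gzero_def using p0 by auto

lemma lab0: "v \<in> V \<Longrightarrow> level par r v \<le> N - 1 \<Longrightarrow> lab v = gzero"
  using vt unfolding valid_tree_def by auto

lemma vert:
  assumes "set c \<subseteq> gf p s" "length c = N"
  shows "path_start V r par N (THE v. path_start V r par N v \<and> path_labels par lab N v = c)
     \<and> path_labels par lab N (THE v. path_start V r par N v \<and> path_labels par lab N v = c) = c"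
proof -
  have "\<exists>!v. path_start V r par N v \<and> path_labels par lab N v = c"
    using vt assms unfolding valid_tree_def by auto
  thus ?thesis by (rule theI')
qed

lemma vert_eq:
  assumes "set c \<subseteq> gf p s" "length c = N" "path_start V r par N v" "path_labels par lab N v = c"
  shows "(THE v. path_start V r par N v \<and> path_labels par lab N v = c) = v"
proof -
  have "\<exists>!v. path_start V r par N v \<and> path_labels par lab N v = c"
    using vt assms unfolding valid_tree_def by auto
  thus ?thesis using assms by (intro the1_equality) auto
qed

lemma step:
  assumes B: "set B \<subseteq> gf p s" "length B = N" "tt_level V r par lab N B \<le> N"
    "B \<noteq> replicate N gzero"
  shows "succ_D p s V r par lab N B = {gzero}
     \<and> tt_level V r par lab N (tl B @ [gzero]) < tt_level V r par lab N B"
proof -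
  define v where "v = (THE v. path_start V r par N v \<and> path_labels par lab N v = B)"
  have pv: "path_start V r par N v" "path_labels par lab N v = B"
    using vert[OF B(1,2)] v_def by auto
  have vV: "v \<in> V" and lv: "N - 1 \<le> level par r v" using pv(1) unfolding path_start_def by auto
  have ttB: "tt_level V r par lab N B = level par r v - (N - 1)"
    unfolding tt_level_def v_def by simp
  have lvN: "level par r v \<ge> N"
  proof (rule ccontr)
    assume "\<not> ?thesis"
    hence "level par r v = N - 1" using lv by auto
    have "B = map (\<lambda>i. gzero) [0..<N]"
      unfolding pv(2)[symmetric] path_labels_def
    proof (rule map_cong[OF refl])
      fix i assume "i \<in> set [0..<N]"
      hence "i \<le> level par r v" using \<open>level par r v = N - 1\<close> by auto
      from lev_iter[OF T vV this] show "lab ((par ^^ i) v) = gzero"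
        using lab0 \<open>level par r v = N - 1\<close> by auto
    qed
    thus False using B(4) by (simp add: map_replicate_const)
  qed
  have lv2: "level par r v \<le> 2 * N - 1" using B(3) ttB by auto
  have vr: "v \<noteq> r" using lvN N1 lev_root[of par r] by auto
  define w where "w = par v"
  have wV: "w \<in> V" and lw: "level par r w = level par r v - 1"
    using lev_par[OF T vV vr] w_def by auto
  have psw: "path_start V r par N w" unfolding path_start_def using wV lw lvN by auto
  have "set (tl B) \<subseteq> set B" by (cases B) auto
  hence gN: "set (tl B @ [gzero]) \<subseteq> gf p s" using B(1) gzero_gf by auto
  have lN: "length (tl B @ [gzero]) = N" using B(2) N1 by auto
  have plw: "path_labels par lab N w = tl B @ [gzero]"
  proof (rule nth_equalityI)
    show "length (path_labels par lab N w) = length (tl B @ [gzero])"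
      using lN unfolding path_labels_def by simp
    fix j assume "j < length (path_labels par lab N w)"
    hence j: "j < N" unfolding path_labels_def by simp
    have lhs: "path_labels par lab N w ! j = lab ((par ^^ Suc j) v)"
      unfolding path_labels_def w_def using j by (simp add: funpow_Suc_right del: funpow.simps)
    show "path_labels par lab N w ! j = (tl B @ [gzero]) ! j"
    proof (cases "j < N - 1")
      case True
      have "(tl B @ [gzero]) ! j = B ! Suc j" using True B(2) by (simp add: nth_append nth_tl)
      also have "\<dots> = lab ((par ^^ Suc j) v)" using pv(2)[symmetric] True
        unfolding path_labels_def by simp
      finally show ?thesis using lhs by simp
    next
      case False
      hence jN: "j = N - 1" using j by auto
      hence "Suc j = N" using N1 by auto
      have "N \<le> level par r v" using lvN .
      from lev_iter[OF T vV this] have "(par ^^ N) v \<in> V" "level par r ((par ^^ N) v) \<le> N - 1"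
        using lv2 by auto
      hence "lab ((par ^^ N) v) = gzero" by (rule lab0)
      thus ?thesis using lhs \<open>Suc j = N\<close> jN B(2) by (simp add: nth_append)
    qed
  qed
  have ttw: "tt_level V r par lab N (tl B @ [gzero]) = level par r w - (N - 1)"
    unfolding tt_level_def using vert_eq[OF gN lN psw plw] by simp
  have lt: "tt_level V r par lab N (tl B @ [gzero]) < tt_level V r par lab N B"
    using ttw ttB lw lvN N1 by auto
  have "succ_D p s V r par lab N B \<subseteq> {gzero}"
  proof
    fix d assume d: "d \<in> succ_D p s V r par lab N B"
    hence dg: "d \<in> gf p s" and dl: "tt_level V r par lab N (tl B @ [d]) < tt_level V r par lab N B"
      unfolding succ_D_def by auto
    have gd: "set (tl B @ [d]) \<subseteq> gf p s" using gN dg by auto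
    have ld: "length (tl B @ [d]) = N" using lN by simp
    define u where "u = (THE v. path_start V r par N v \<and> path_labels par lab N v = tl B @ [d])"
    have pu: "path_start V r par N u" "path_labels par lab N u = tl B @ [d]"
      using vert[OF gd ld] u_def by auto
    have uV: "u \<in> V" and lu: "N - 1 \<le> level par r u" using pu(1) unfolding path_start_def by auto
    have "tt_level V r par lab N (tl B @ [d]) = level par r u - (N - 1)"
      unfolding tt_level_def u_def by simp
    hence lu2: "level par r u \<le> 2 * N - 2" using dl ttB lv2 lu by auto
    from lev_iter[OF T uV lu] have "(par ^^ (N - 1)) u \<in> V" "level par r ((par ^^ (N-1)) u) \<le> N - 1"
      using lu2 by auto
    hence l0: "lab ((par ^^ (N - 1)) u) = gzero" by (rule lab0)
    have "d = (tl B @ [d]) ! (N - 1)" using B(2) N1 by (simp add: nth_append)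
    also have "\<dots> = lab ((par ^^ (N - 1)) u)" using pu(2)[symmetric] N1
      unfolding path_labels_def by simp
    finally show "d \<in> {gzero}" using l0 by simp
  qed
  moreover have "gzero \<in> succ_D p s V r par lab N B"
    unfolding succ_D_def by (rule CollectI, rule conjI[OF gzero_gf lt])
  ultimately show ?thesis using lt by blast
qed

end

theorem lemma4p1:
  fixes p s N :: nat and V :: "'v set" and r :: 'v and par :: "'v \<Rightarrow> 'v"
    and lab :: "'v \<Rightarrow> nat \<Rightarrow> nat" and lam :: "(nat \<Rightarrow> nat) list \<Rightarrow> real"
  assumes "prime p" and "s \<ge> 1" and "N \<ge> 1"
    and "valid_tree p s N V r par lab"
    and "is_mask_lambda p s N lam"
    and "compatible p s V r par lab N lam"
  shows "\<forall>i. set i \<subseteq> gf p s \<and> length i = N \<and> tt_level V r par lab N i \<le> N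
             \<longrightarrow> array_a0 N lam i = 1"
proof (intro allI impI)
  fix i assume hi: "set i \<subseteq> gf p s \<and> length i = N \<and> tt_level V r par lab N i \<le> N"
  have p0: "p > 0" using assms(1) prime_gt_0_nat by blast
  note vt = assms(4) and N1 = assms(3)
  have CC: "lam (replicate (N + 1) gzero) = 1 \<and>
     (\<forall>d\<in>gf p s - {gzero}. lam (replicate N gzero @ [d]) = 0) \<and>
     (\<forall>B. set B \<subseteq> gf p s \<and> length B = N \<and> B \<noteq> replicate N gzero \<longrightarrow>
          (\<Sum>d\<in>succ_D p s V r par lab N B. lam (B @ [d])) = 1 \<and>
          (\<forall>d\<in>gf p s - succ_D p s V r par lab N B. lam (B @ [d]) = 0))"
    using assms(6) unfolding compatible_def .
  have cp1: "lam (replicate (N + 1) gzero) = 1" using conjunct1[OF CC] .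
  have cp3: "(\<Sum>d\<in>succ_D p s V r par lab N B. lam (B @ [d])) = 1"
    if "set B \<subseteq> gf p s" "length B = N" "B \<noteq> replicate N gzero" for B
    using conjunct1[OF mp[OF spec[OF conjunct2[OF conjunct2[OF CC]], of B] conjI[OF that(1) conjI[OF that(2,3)]]]] .
  have lamB: "lam (B @ [gzero]) = 1"
    if B: "set B \<subseteq> gf p s" "length B = N" "tt_level V r par lab N B \<le> N" for B
  proof (cases "B = replicate N gzero")
    case True
    hence "B @ [gzero] = replicate (N + 1) gzero" by (simp add: replicate_append_same)
    thus ?thesis using cp1 by simp
  next
    case False
    have D: "succ_D p s V r par lab N B = {gzero}" using step[OF vt p0 N1 B False] by auto
    from cp3[OF B(1,2) False] have "(\<Sum>d\<in>succ_D p s V r par lab N B. lam (B @ [d])) = 1" .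
    thus ?thesis using D by simp
  qed
  have inv: "set (drop k i @ replicate k gzero) \<subseteq> gf p s
      \<and> length (drop k i @ replicate k gzero) = N
      \<and> tt_level V r par lab N (drop k i @ replicate k gzero) \<le> N" if "k < N" for k
    using that
  proof (induction k)
    case 0 thus ?case using hi by simp
  next
    case (Suc k)
    define B where "B = drop k i @ replicate k gzero"
    have IH: "set B \<subseteq> gf p s" "length B = N" "tt_level V r par lab N B \<le> N"
      using Suc B_def by auto
    have ne: "drop k i \<noteq> []" using Suc.prems hi by simp
    have "tl B @ [gzero] = tl (drop k i) @ replicate k gzero @ [gzero]" using ne B_def by simp
    also have "\<dots> = drop (Suc k) i @ replicate (Suc k) gzero"
      by (simp add: replicate_append_same drop_Suc tl_drop)
    finally have eq: "drop (Suc k) i @ replicate (Suc k) gzero = tl B @ [gzero]" by simp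
    have g: "gzero \<in> gf p s" using gzero_gf[OF vt p0 N1] .
    have "set (tl B) \<subseteq> set B" by (cases B) auto
    hence s1: "set (tl B @ [gzero]) \<subseteq> gf p s" using IH(1) g by auto
    have l1: "length (tl B @ [gzero]) = N" using IH(2) N1 by simp
    have t1: "tt_level V r par lab N (tl B @ [gzero]) \<le> N"
    proof (cases "B = replicate N gzero")
      case True
      have "tl B @ [gzero] = B" using True N1
        by (cases N) (auto simp: replicate_append_same)
      thus ?thesis using IH by simp
    next
      case False
      thus ?thesis using step[OF vt p0 N1 IH False] IH(3) by auto
    qed
    show ?case using eq s1 l1 t1 by simp
  qed
  show "array_a0 N lam i = 1"
    unfolding array_a0_def
  proof (rule prod.neutral, rule ballI)
    fix k assume k: "k \<in> {1..N}"
    have "drop (k - 1) i @ replicate k gzero = (drop (k - 1) i @ replicate (k - 1) gzero) @ [gzero]"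
      using k by (cases k) (auto simp: replicate_append_same)
    moreover have "k - 1 < N" using k by auto
    moreover have "lam ((drop (k - 1) i @ replicate (k - 1) gzero) @ [gzero]) = 1"
      using lamB inv[OF \<open>k - 1 < N\<close>] by blast
    ultimately show "lam (drop (k - 1) i @ replicate k gzero) = 1" by simp
  qed
qed

end
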